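(* Let $d_{\mathcal X}$ be a metric on $\mathcal X$, $Q$ a probability measure on $\mathcal Z$, and $P_{Z|X}$ a Markov kernel with $P_{Z|X}(\cdot|x)\ll Q$ for all $x$. If $P_{Z|X}$ satisfies $\varepsilon\cdot d_{\mathcal X}$-privacy, then for every $\alpha>1$ the PPR-compressed mechanism $x\mapsto((Z_i)_{i\ge1},K)$ satisfies $2\alpha\varepsilon\cdot d_{\mathcal X}$-privacy.
   Context: A Markov kernel $P_{W|X}$ satisfies $\varepsilon\cdot d_{\mathcal X}$-privacy if $\Pr(W\in S\mid X=x)\le e^{\varepsilon d_{\mathcal X}(x,x')}\Pr(W\in S\mid X=x')$ for all $x,x'\in\mathcal X$ and measurable $S$. PPR: let $Z_1,Z_2,\ldots$ be i.i.d. $\sim Q$, independent of the points $T_1\le T_2\le\cdots$ of a rate-$1$ Poisson process on $[0,\infty)$. For input $x$, with $P=P_{Z|X}(\cdot|x)$, set $\tilde T_i:=T_i(\frac{\mathrm dP}{\mathrm dQ}(Z_i))^{-1}$ ($:=\infty$ if the derivative is $0$, $\infty^{-\alpha}:=0$), and draw $K$ with $\Pr(K=k\mid (Z_i,T_i)_i)=\tilde T_k^{-\alpha}/\sum_i\tilde T_i^{-\alpha}$ (fresh randomness for each input). The PPR-compressed mechanism is the kernel $x\mapsto((Z_i)_{i\ge1},K)$; the shared sequence $(Z_i)$ does not depend on $x$. *)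

theory Defs
  imports "HOL-Probability.Probability"
begin

definition is_metric :: "('x \<Rightarrow> 'x \<Rightarrow> real) \<Rightarrow> bool" where
  "is_metric d \<longleftrightarrow> (\<forall>x y. d x y = 0 \<longleftrightarrow> x = y) \<and> (\<forall>x y. d x y = d y x)
      \<and> (\<forall>x y z. d x z \<le> d x y + d y z)"

definition metric_private :: "('x \<Rightarrow> 'y measure) \<Rightarrow> real \<Rightarrow> ('x \<Rightarrow> 'x \<Rightarrow> real) \<Rightarrow> bool" where
  "metric_private M eps d \<longleftrightarrow>
     (\<forall>x x'. \<forall>S \<in> sets (M x).
        emeasure (M x) S \<le> ennreal (exp (eps * d x x')) * emeasure (M x') S)"

text \<open>Exponential(1) distribution; the rate-1 Poisson process points are the
  partial sums of i.i.d. Exp(1) variables.\<close>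
definition exp1 :: "real measure" where
  "exp1 = density lborel (exponential_density 1)"

definition arrival :: "(nat \<Rightarrow> real) \<Rightarrow> nat \<Rightarrow> real" where
  "arrival e i = (\<Sum>j\<le>i. e j)"

definition ppr_base :: "'z measure \<Rightarrow> ((nat \<Rightarrow> 'z) \<times> (nat \<Rightarrow> real)) measure" where
  "ppr_base Q = (\<Pi>\<^sub>M i\<in>UNIV. Q) \<Otimes>\<^sub>M (\<Pi>\<^sub>M i\<in>UNIV. exp1)"

text \<open>Weight tilde T_k ^ (-alpha) = (r(Z_k) / T_k) ^ alpha, with r = dP/dQ
  (r = 0 gives weight 0, r = infinity gives tilde T = 0 hence weight infinity).\<close>
definition ppr_weight :: "real \<Rightarrow> ('z \<Rightarrow> ennreal) \<Rightarrow> (nat \<Rightarrow> 'z) \<Rightarrow> (nat \<Rightarrow> real) \<Rightarrow> nat \<Rightarrow> ennreal" where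
  "ppr_weight \<alpha> r z e k =
     (if r (z k) = \<infinity> then \<infinity>
      else ennreal ((enn2real (r (z k)) / arrival e k) powr \<alpha>))"

text \<open>Output law of ((Z_i)_i, K) for the input distribution P = P_{Z|X}(.|x):
  the joint law of (shared randomness, K) has density w_k / (sum_i w_i)
  w.r.t. base \<otimes> counting measure, pushed forward to ((Z_i)_i, K).\<close>
definition ppr_mech :: "real \<Rightarrow> 'z measure \<Rightarrow> 'z measure \<Rightarrow> ((nat \<Rightarrow> 'z) \<times> nat) measure" where
  "ppr_mech \<alpha> Q P =
     distr
       (density (ppr_base Q \<Otimes>\<^sub>M count_space UNIV)
          (\<lambda>((z, e), k). ppr_weight \<alpha> (RN_deriv Q P) z e k /
                          (\<Sum>i. ppr_weight \<alpha> (RN_deriv Q P) z e i)))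
       ((\<Pi>\<^sub>M i\<in>UNIV. Q) \<Otimes>\<^sub>M count_space UNIV)
       (\<lambda>((z, e), k). (z, k))"

end

theory Submission
  imports Defs
begin


lemma sets_exp1[measurable_cong]: "sets exp1 = sets borel"
  unfolding exp1_def by simp

lemma meas_arrival[measurable]: "(\<lambda>e. arrival e k) \<in> borel_measurable (\<Pi>\<^sub>M i\<in>UNIV. exp1)"
  unfolding arrival_def by measurable

lemma meas_weight_k:
  assumes [measurable]: "r \<in> borel_measurable Q"
  shows "(\<lambda>(z,e). ppr_weight \<alpha> r z e k) \<in> borel_measurable (ppr_base Q)"
proof -
  have [measurable]: "(\<lambda>z. r (z k)) \<in> borel_measurable (\<Pi>\<^sub>M i\<in>UNIV. Q)" by measurable
  show ?thesis
  unfolding ppr_weight_def ppr_base_def by measurable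
qed

lemma meas_weight:
  assumes [measurable]: "r \<in> borel_measurable Q"
  shows "(\<lambda>((z, e), k). ppr_weight \<alpha> r z e k /
                          (\<Sum>i. ppr_weight \<alpha> r z e i)) \<in>
     borel_measurable (ppr_base Q \<Otimes>\<^sub>M count_space UNIV)"
proof -
  have [measurable]: "(\<lambda>x. ppr_weight \<alpha> r (fst x) (snd x) k) \<in> borel_measurable (ppr_base Q)" for k
    using meas_weight_k[OF assms, of \<alpha> k] by (simp add: split_beta')
  show ?thesis
    using measurable_compose_countable'[where f="\<lambda>k x. ppr_weight \<alpha> r (fst (fst x)) (snd (fst x)) k /
                          (\<Sum>i. ppr_weight \<alpha> r (fst (fst x)) (snd (fst x)) i)" and g=snd and I=UNIV
       and M="ppr_base Q \<Otimes>\<^sub>M count_space UNIV" and N=borel]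
    by (simp add: split_beta')
qed


lemma norm_le:
  fixes u v :: "nat \<Rightarrow> ennreal"
  assumes uv: "\<And>k. u k \<le> ennreal K * v k" and vu: "\<And>k. v k \<le> ennreal K * u k" and K: "K > 0"
  shows "u k / (\<Sum>i. u i) \<le> ennreal (K^2) * (v k / (\<Sum>i. v i))"
proof -
  define U where "U = (\<Sum>i. u i)"
  define V where "V = (\<Sum>i. v i)"
  have UV: "U \<le> ennreal K * V" unfolding U_def V_def
    using suminf_le[of u "\<lambda>i. ennreal K * v i"] uv by simp
  have VU: "V \<le> ennreal K * U" unfolding U_def V_def
    using suminf_le[of v "\<lambda>i. ennreal K * u i"] vu by simp
  have ukU: "u k \<le> U" unfolding U_def using ennreal_suminf_lessD le_less_linear by fastforce
  have vkV: "v k \<le> V" unfolding V_def using ennreal_suminf_lessD le_less_linear by fastforce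
  show ?thesis
  proof (cases "U = top")
    case True then show ?thesis by (simp add: U_def[symmetric])
  next
    case Uf: False
    show ?thesis
    proof (cases "U = 0")
      case True then have "u k = 0" using ukU by simp
      then show ?thesis by simp
    next
      case U0: False
      have Vf: "V \<noteq> top" using VU Uf by (metis ennreal_mult_eq_top_iff ennreal_neq_top top_unique)
      have V0: "V \<noteq> 0" using UV U0 by auto
      obtain U' where U': "U = ennreal U'" "U' > 0" using Uf U0
        by (cases U) (auto simp: ennreal_less_iff)
      obtain V' where V': "V = ennreal V'" "V' > 0" using Vf V0
        by (cases V) auto
      obtain u' where u': "u k = ennreal u'" "u' \<ge> 0" using ukU Uf
        by (cases "u k") (auto simp: top_unique)
      obtain v' where v': "v k = ennreal v'" "v' \<ge> 0" using vkV Vf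
        by (cases "v k") (auto simp: top_unique)
      have r1: "u' \<le> K * v'" using uv[of k] u' v' K by (simp add: ennreal_mult''[symmetric])
      have r2: "V' \<le> K * U'" using VU U' V' K by (simp add: ennreal_mult''[symmetric])
      have "u' / U' \<le> K^2 * (v' / V')"
      proof -
        have "u' / U' \<le> K * v' / U'" using r1 U' by (simp add: divide_right_mono)
        also have "\<dots> \<le> K * v' * K / V'"
          proof -
          have "V' * v' \<le> K * (U' * v')" using mult_right_mono[OF r2 v'(2)] by (simp add: mult.assoc)
          then show ?thesis using U' V' K by (simp add: field_simps)
        qed
        finally show ?thesis by (simp add: power2_eq_square field_simps)
      qed
      then show ?thesis
        using U' V' u' v' K
        by (simp add: U_def[symmetric] V_def[symmetric] divide_ennreal ennreal_mult''[symmetric])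
    qed
  qed
qed


lemma weight_le:
  assumes ab: "r (z k) \<le> ennreal c * r' (z k)" and c: "c > 0" and T: "arrival e k \<ge> 0" and a: "\<alpha> > 0"
  shows "ppr_weight \<alpha> r z e k \<le> ennreal (c powr \<alpha>) * ppr_weight \<alpha> r' z e k"
proof (cases "r' (z k) = top")
  case True
  then show ?thesis using c by (simp add: ppr_weight_def ennreal_mult_top)
next
  case False
  then have rf: "r (z k) \<noteq> top" using ab by (metis ennreal_mult_eq_top_iff ennreal_neq_top top_unique)
  define a where "a = enn2real (r (z k))"
  define b where "b = enn2real (r' (z k))"
  have a0: "a \<ge> 0" "b \<ge> 0" unfolding a_def b_def by auto
  have "ennreal a = r (z k)" "ennreal b = r' (z k)" unfolding a_def b_def
    using rf False by (simp_all add: ennreal_enn2real less_top[symmetric])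
  then have "ennreal a \<le> ennreal c * ennreal b" using ab by simp
  then have ab': "a \<le> c * b" using c a0 by (simp add: ennreal_mult''[symmetric])
  have "(a / arrival e k) powr \<alpha> \<le> (c * b / arrival e k) powr \<alpha>"
    using ab' T a0 a by (intro powr_mono2) (auto simp: divide_right_mono)
  also have "\<dots> = c powr \<alpha> * (b / arrival e k) powr \<alpha>"
    using c a0 T by (simp add: powr_mult[symmetric] times_divide_eq_right)
  finally show ?thesis using rf False
    unfolding ppr_weight_def a_def[symmetric] b_def[symmetric]
    by (simp add: ennreal_mult''[symmetric])
qed

lemma AE_le_of_integrals:
  assumes borel: "f \<in> borel_measurable M" "g \<in> borel_measurable M"
    and g_fin: "integral\<^sup>N M g \<noteq> \<infinity>"
    and le: "\<And>A. A \<in> sets M \<Longrightarrow> (\<integral>\<^sup>+ x. f x * indicator A x \<partial>M) \<le> (\<integral>\<^sup>+ x. g x * indicator A x \<partial>M)"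
  shows "AE x in M. f x \<le> g x"
proof -
  let ?P = "\<lambda>f A. \<integral>\<^sup>+ x. f x * indicator A x \<partial>M"
  let ?N = "{x\<in>space M. g x < f x}"
  have N: "?N \<in> sets M" using borel by simp
  have "?P g ?N \<le> integral\<^sup>N M g"
    by (intro nn_integral_mono_AE) (auto split: split_indicator)
  then have Pg_fin: "?P g ?N \<noteq> \<infinity>" using g_fin by (auto simp: top_unique)
  have "?P (\<lambda>x. (f x - g x)) ?N = (\<integral>\<^sup>+x. f x * indicator ?N x - g x * indicator ?N x \<partial>M)"
    by (auto intro!: nn_integral_cong simp: indicator_def)
  also have "\<dots> = ?P f ?N - ?P g ?N"
  proof (rule nn_integral_diff)
    show "(\<lambda>x. f x * indicator ?N x) \<in> borel_measurable M" "(\<lambda>x. g x * indicator ?N x) \<in> borel_measurable M"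
      using borel N by auto
    show "AE x in M. g x * indicator ?N x \<le> f x * indicator ?N x"
      by (auto split: split_indicator)
  qed fact
  also have "\<dots> = 0"
  proof (rule diff_eq_0_ennreal)
    show "?P f ?N < top" using le[OF N] Pg_fin by (simp add: less_top[symmetric]) (metis le_less_trans less_top)
  qed (rule le[OF N])
  finally have "?P (\<lambda>x. (f x - g x)) ?N = 0" .
  then have AE0: "AE x in M. (f x - g x) * indicator ?N x = 0"
    using N borel by (subst (asm) nn_integral_0_iff_AE) auto
  have pw: "f x \<le> g x" if x: "x \<in> space M" and e: "(f x - g x) * indicator ?N x = 0" for x
  proof (rule ccontr)
    assume nle: "\<not> f x \<le> g x"
    then have "x \<in> ?N" using x by (simp add: not_le)
    then have "indicator ?N x = (1::ennreal)" by simp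
    with e have "f x - g x = 0" by simp
    then have "f x \<le> g x" using diff_eq_0_iff_ennreal by blast
    with nle show False by blast
  qed
  have "AE x in M. (f x - g x) * indicator ?N x = 0 \<longrightarrow> f x \<le> g x"
    by (rule AE_I2) (use pw in blast)
  from AE_mp[OF AE0 this] show "AE x in M. f x \<le> g x" .
qed

lemma RN_le:
  assumes Q: "prob_space Q" and s1: "sets N1 = sets Q" and s2: "sets N2 = sets Q"
    and ac1: "absolutely_continuous Q N1" and ac2: "absolutely_continuous Q N2"
    and fin: "finite_measure N2"
    and le: "\<And>S. S \<in> sets Q \<Longrightarrow> emeasure N1 S \<le> ennreal c * emeasure N2 S"
  shows "AE z in Q. RN_deriv Q N1 z \<le> ennreal c * RN_deriv Q N2 z"
proof -
  interpret Q: prob_space Q by fact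
  have d1: "density Q (RN_deriv Q N1) = N1" using Q.density_RN_deriv[OF ac1 s1] .
  have d2: "density Q (RN_deriv Q N2) = N2" using Q.density_RN_deriv[OF ac2 s2] .
  have em: "emeasure N S = (\<integral>\<^sup>+ x. RN_deriv Q N x * indicator S x \<partial>Q)"
    if "density Q (RN_deriv Q N) = N" "S \<in> sets Q" for N S
    using emeasure_density[of "RN_deriv Q N" Q S] that by simp
  show ?thesis
  proof (rule AE_le_of_integrals)
    show "(\<lambda>z. ennreal c * RN_deriv Q N2 z) \<in> borel_measurable Q" by simp
    show "RN_deriv Q N1 \<in> borel_measurable Q" by simp
    have "integral\<^sup>N Q (\<lambda>z. ennreal c * RN_deriv Q N2 z) = ennreal c * emeasure N2 (space Q)"
      using em[OF d2, of "space Q"] by (simp add: nn_integral_cmult)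
    also have "\<dots> \<noteq> \<infinity>"
    proof -
      have "space N2 = space Q" using sets_eq_imp_space_eq[OF s2] .
      then have "emeasure N2 (space Q) \<noteq> \<infinity>" using finite_measure.emeasure_finite[OF fin, of "space N2"] by simp
      then show ?thesis by (simp add: ennreal_mult_eq_top_iff)
    qed
    finally show "integral\<^sup>N Q (\<lambda>z. ennreal c * RN_deriv Q N2 z) \<noteq> \<infinity>" .
    fix A assume A: "A \<in> sets Q"
    have "(\<integral>\<^sup>+ x. RN_deriv Q N1 x * indicator A x \<partial>Q) = emeasure N1 A" using em[OF d1 A] by simp
    also have "\<dots> \<le> ennreal c * emeasure N2 A" using le[OF A] .
    also have "\<dots> = (\<integral>\<^sup>+ x. ennreal c * RN_deriv Q N2 x * indicator A x \<partial>Q)"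
    proof -
      have "(\<integral>\<^sup>+x. ennreal c * (RN_deriv Q N2 x * indicator A x) \<partial>Q) = ennreal c * (\<integral>\<^sup>+x. RN_deriv Q N2 x * indicator A x \<partial>Q)"
        by (rule nn_integral_cmult) (use A in simp)
      then show ?thesis using em[OF d2 A] by (simp add: mult.assoc)
    qed
    finally show "(\<integral>\<^sup>+ x. RN_deriv Q N1 x * indicator A x \<partial>Q) \<le> (\<integral>\<^sup>+ x. ennreal c * RN_deriv Q N2 x * indicator A x \<partial>Q)" .
  qed
qed



lemma exp1_prob: "prob_space exp1"
  unfolding exp1_def by (rule prob_space_exponential_density) simp

lemma AE_exp1_nonneg: "AE t in exp1. t \<ge> 0"
  unfolding exp1_def
  by (subst AE_density) (auto simp: exponential_density_def intro!: AE_I2 split: if_splits)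

lemma AE_exp_seq_nonneg:
  assumes "prob_space Q"
  shows "AE e in (\<Pi>\<^sub>M (i::nat)\<in>UNIV. exp1). \<forall>j. e j \<ge> 0"
proof -
  interpret PE: product_prob_space "\<lambda>_::nat. exp1" UNIV
    by (intro product_prob_space.intro product_sigma_finite.intro product_prob_space_axioms.intro
        prob_space_imp_sigma_finite exp1_prob)
  show ?thesis
  proof -
    have "AE e in (\<Pi>\<^sub>M i\<in>UNIV. exp1). 0 \<le> e j" for j :: nat
      using PE.AE_component[of j "\<lambda>t. 0 \<le> t"] AE_exp1_nonneg by simp
    then show ?thesis by (simp add: AE_all_countable)
  qed
qed



theorem theorem4:
  fixes d :: "'x \<Rightarrow> 'x \<Rightarrow> real"
    and Q :: "'z measure"
    and P :: "'x \<Rightarrow> 'z measure"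
    and \<epsilon> \<alpha> :: real
  assumes "is_metric d"
    and "prob_space Q"
    and "\<And>x. prob_space (P x)"
    and "\<And>x. sets (P x) = sets Q"
    and "\<And>x. absolutely_continuous Q (P x)"
    and "metric_private P \<epsilon> d"
    and "\<alpha> > 1"
  shows "metric_private (\<lambda>x. ppr_mech \<alpha> Q (P x)) (2 * \<alpha> * \<epsilon>) d"
proof -
  interpret Q: prob_space Q by fact
  have dsym: "d a b = d b a" for a b using assms(1) unfolding is_metric_def by blast
  have dnn: "d a b \<ge> 0" for a b
  proof -
    have "d a a \<le> d a b + d b a" "d a a = 0" using assms(1) unfolding is_metric_def by blast+
    then show ?thesis using dsym[of a b] by simp
  qed
  define MZ where "MZ = (\<Pi>\<^sub>M i\<in>(UNIV::nat set). Q)"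
  define ME where "ME = (\<Pi>\<^sub>M i\<in>(UNIV::nat set). exp1)"
  define B where "B = ppr_base Q \<Otimes>\<^sub>M count_space (UNIV :: nat set)"
  define N where "N = MZ \<Otimes>\<^sub>M count_space (UNIV :: nat set)"
  define g :: "((nat \<Rightarrow> 'z) \<times> (nat \<Rightarrow> real)) \<times> nat \<Rightarrow> (nat \<Rightarrow> 'z) \<times> nat"
    where "g = (\<lambda>((z, e), k). (z, k))"
  define r where "r y = RN_deriv Q (P y)" for y
  define F where "F y = (\<lambda>((z, e), k). ppr_weight \<alpha> (r y) z e k / (\<Sum>i. ppr_weight \<alpha> (r y) z e i))" for y
  have mech: "ppr_mech \<alpha> Q (P y) = distr (density B (F y)) N g" for y
    unfolding ppr_mech_def B_def N_def MZ_def F_def r_def g_def ..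
  have Fmeas: "F y \<in> borel_measurable B" for y
    unfolding F_def B_def r_def by (rule meas_weight) simp
  have gmeas: "g \<in> measurable B N"
    unfolding g_def B_def N_def MZ_def ppr_base_def by (simp add: split_beta') measurable
  have pZ: "prob_space MZ" unfolding MZ_def by (rule prob_space_PiM) (rule assms(2))
  have pE: "prob_space ME" unfolding ME_def by (rule prob_space_PiM) (rule exp1_prob)
  have pB: "prob_space (ppr_base Q)" unfolding ppr_base_def MZ_def[symmetric] ME_def[symmetric]
    using pZ pE by (rule prob_space_pair)
  have sB: "pair_sigma_finite (ppr_base Q) (count_space (UNIV :: nat set))"
    by (intro pair_sigma_finite.intro prob_space_imp_sigma_finite pB sigma_finite_measure_count_space)
  have sZE: "pair_sigma_finite MZ ME"
    by (intro pair_sigma_finite.intro prob_space_imp_sigma_finite pZ pE)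
  interpret PZ: product_prob_space "\<lambda>_::nat. Q" UNIV
    by (intro product_prob_space.intro product_sigma_finite.intro product_prob_space_axioms.intro
        prob_space_imp_sigma_finite assms(2))
  have hB: "AE w in ppr_base Q. \<forall>k. F x (w, k) \<le> ennreal (exp (2 * \<alpha> * \<epsilon> * d x x')) * F x' (w, k)" for x x'
  proof -
    define c where "c = exp (\<epsilon> * d x x')"
    have c0: "c > 0" unfolding c_def by simp
    have mp: "emeasure (P a) S \<le> ennreal (exp (\<epsilon> * d a b)) * emeasure (P b) S" if "S \<in> sets Q" for a b S
      using assms(6) that assms(4)[of a] unfolding metric_private_def by blast
    have finP: "finite_measure (P y)" for y using assms(3)[of y] by (simp add: prob_space_def)
    have le1: "AE z in Q. r x z \<le> ennreal c * r x' z"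
      unfolding r_def c_def
      by (rule RN_le[OF assms(2) assms(4) assms(4) assms(5) assms(5) finP mp])
    have le2: "AE z in Q. r x' z \<le> ennreal c * r x z"
      unfolding r_def c_def dsym[of x x']
      by (rule RN_le[OF assms(2) assms(4) assms(4) assms(5) assms(5) finP mp])
    have hZ: "AE z in MZ. \<forall>k. r x (z k) \<le> ennreal c * r x' (z k) \<and> r x' (z k) \<le> ennreal c * r x (z k)"
    proof -
      have "AE z in MZ. r x (z k) \<le> ennreal c * r x' (z k) \<and> r x' (z k) \<le> ennreal c * r x (z k)" for k :: nat
        unfolding MZ_def using le1 le2
        by (intro PZ.AE_component[of k "\<lambda>t. r x t \<le> ennreal c * r x' t \<and> r x' t \<le> ennreal c * r x t"]) auto
      then show ?thesis by (simp add: AE_all_countable)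
    qed
    have hE: "AE e in ME. \<forall>j. 0 \<le> e j" unfolding ME_def by (rule AE_exp_seq_nonneg) fact
    have rmeas[measurable]: "r y \<in> borel_measurable Q" for y unfolding r_def by simp
    have good: "AE w in MZ \<Otimes>\<^sub>M ME. (\<forall>k. r x (fst w k) \<le> ennreal c * r x' (fst w k) \<and> r x' (fst w k) \<le> ennreal c * r x (fst w k))
          \<and> (\<forall>j. 0 \<le> snd w j)"
    proof (rule pair_sigma_finite.AE_pair_measure[OF sZE])
      show "{w \<in> space (MZ \<Otimes>\<^sub>M ME). (\<forall>k. r x (fst w k) \<le> ennreal c * r x' (fst w k) \<and> r x' (fst w k) \<le> ennreal c * r x (fst w k))
          \<and> (\<forall>j. 0 \<le> snd w j)} \<in> sets (MZ \<Otimes>\<^sub>M ME)"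
        unfolding MZ_def ME_def by measurable
      show "AE z in MZ. AE e in ME. (\<forall>k. r x (fst (z, e) k) \<le> ennreal c * r x' (fst (z, e) k) \<and> r x' (fst (z, e) k) \<le> ennreal c * r x (fst (z, e) k))
          \<and> (\<forall>j. 0 \<le> snd (z, e) j)"
      proof -
        have inner: "AE e in ME. (\<forall>k. r x (fst (z, e) k) \<le> ennreal c * r x' (fst (z, e) k) \<and> r x' (fst (z, e) k) \<le> ennreal c * r x (fst (z, e) k))
          \<and> (\<forall>j. 0 \<le> snd (z, e) j)"
          if hz: "\<forall>k. r x (z k) \<le> ennreal c * r x' (z k) \<and> r x' (z k) \<le> ennreal c * r x (z k)" for z
          using hE by (rule AE_mp) (rule AE_I2, use hz in auto)
        show ?thesis using hZ by (rule AE_mp) (rule AE_I2, use inner in blast)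
      qed
    qed
    define K where "K = c powr \<alpha>"
    have K0: "K > 0" unfolding K_def using c0 by simp
    have K2: "K^2 = exp (2 * \<alpha> * \<epsilon> * d x x')"
      unfolding K_def c_def by (simp add: powr_def power2_eq_square exp_add[symmetric])
    show ?thesis
      using good unfolding ppr_base_def MZ_def[symmetric] ME_def[symmetric]
    proof (rule AE_mp, intro AE_I2 impI allI)
      fix w :: "(nat \<Rightarrow> 'z) \<times> (nat \<Rightarrow> real)" and k :: nat
      assume gw: "(\<forall>k. r x (fst w k) \<le> ennreal c * r x' (fst w k) \<and> r x' (fst w k) \<le> ennreal c * r x (fst w k))
          \<and> (\<forall>j. 0 \<le> snd w j)"
      obtain z :: "nat \<Rightarrow> 'z" and e :: "nat \<Rightarrow> real" where w: "w = (z, e)" by (cases w)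
      have T: "arrival e i \<ge> 0" for i using gw unfolding w arrival_def by (auto intro: sum_nonneg)
      have uv: "ppr_weight \<alpha> (r x) z e i \<le> ennreal K * ppr_weight \<alpha> (r x') z e i" for i
        unfolding K_def using gw w T assms(7) c0 by (intro weight_le) auto
      have vu: "ppr_weight \<alpha> (r x') z e i \<le> ennreal K * ppr_weight \<alpha> (r x) z e i" for i
        unfolding K_def using gw w T assms(7) c0 by (intro weight_le) auto
      show "F x (w, k) \<le> ennreal (exp (2 * \<alpha> * \<epsilon> * d x x')) * F x' (w, k)"
        unfolding w F_def K2[symmetric] using norm_le[OF uv vu K0] by simp
    qed
  qed
  have hBB: "AE w in B. F x w \<le> ennreal (exp (2 * \<alpha> * \<epsilon> * d x x')) * F x' w" for x x'
    unfolding B_def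
  proof (rule pair_sigma_finite.AE_pair_measure[OF sB])
    show "{w \<in> space (ppr_base Q \<Otimes>\<^sub>M count_space UNIV). F x w \<le> ennreal (exp (2 * \<alpha> * \<epsilon> * d x x')) * F x' w}
        \<in> sets (ppr_base Q \<Otimes>\<^sub>M count_space UNIV)"
      using Fmeas[of x] Fmeas[of x'] unfolding B_def by measurable
    show "AE w in ppr_base Q. AE k in count_space UNIV. F x (w, k) \<le> ennreal (exp (2 * \<alpha> * \<epsilon> * d x x')) * F x' (w, k)"
      using hB[of x x'] by (rule AE_mp) (intro AE_I2 impI, auto intro!: AE_I2)
  qed
  show ?thesis
    unfolding metric_private_def
  proof (intro allI ballI)
    fix x x' S assume S: "S \<in> sets (ppr_mech \<alpha> Q (P x))"
    then have SN: "S \<in> sets N" unfolding mech by simp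
    define A where "A = g -` S \<inter> space B"
    have A: "A \<in> sets B" unfolding A_def using gmeas SN by (rule measurable_sets)
    have em: "emeasure (ppr_mech \<alpha> Q (P y)) S = (\<integral>\<^sup>+ w. F y w * indicator A w \<partial>B)" for y
    proof -
      have "emeasure (ppr_mech \<alpha> Q (P y)) S = emeasure (density B (F y)) (g -` S \<inter> space (density B (F y)))"
        unfolding mech using gmeas SN by (intro emeasure_distr) auto
      also have "\<dots> = emeasure (density B (F y)) A" unfolding A_def by simp
      also have "\<dots> = (\<integral>\<^sup>+ w. F y w * indicator A w \<partial>B)" using Fmeas A by (rule emeasure_density)
      finally show ?thesis .
    qed
    let ?C = "ennreal (exp (2 * \<alpha> * \<epsilon> * d x x'))"
    have "(\<integral>\<^sup>+ w. F x w * indicator A w \<partial>B) \<le> (\<integral>\<^sup>+ w. ?C * (F x' w * indicator A w) \<partial>B)"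
      using hBB[of x x'] by (rule nn_integral_mono_AE[OF AE_mp]) (intro AE_I2 impI, auto simp: indicator_def)
    also have "\<dots> = ?C * (\<integral>\<^sup>+ w. F x' w * indicator A w \<partial>B)"
      using Fmeas A by (intro nn_integral_cmult) auto
    finally show "emeasure (ppr_mech \<alpha> Q (P x)) S \<le> ?C * emeasure (ppr_mech \<alpha> Q (P x')) S"
      unfolding em .
  qed
qed
end
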